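(* Let $G'$ be a context-free grammar with start symbol $s$, no $\varepsilon$-rules and no useless nonterminal, let $\ell$ be a prefix of $G'$, and let $\mathrm{Expl}(G_\ell)$ be its explanation graph (defined in the context). Then for every defined goal $H$ with defining formula $H\Leftrightarrow\alpha_1\vee\dots\vee\alpha_M$ and every $i$, no two distinct occurrences of defined goals in the conjunction $\alpha_i$ belong to the same SCC.
   Context: Grammar: $G'$ has finite terminal set $\Sigma$, finite nonterminal set $N$, start symbol $s\in N$; every rule $A\to\alpha$ has $\alpha\in(N\cup\Sigma)^+$; no nonterminal is useless (each has a rule occurring in some derivation of a terminal string from $s$). A prefix is a nonempty string $\ell\in\Sigma^+$ that is an initial segment of some terminal string derivable from $s$. Explanation graph. For a prefix $\ell$ consider ground atoms $q(\ell)$, $p(\beta,u,v)$ with $\beta\in(N\cup\Sigma)^*$, $u,v\in\Sigma^*$, and switch atoms $m(A\to\alpha)$ for rules of $G'$. Consider all ground clauses: (C0) $q(\ell)\leftarrow p(s,\ell,\varepsilon)$; (C1) $p(\varepsilon,u,u)\leftarrow$ (empty body), for all $u$; (C2) for $a\in\Sigma$: $p(a\beta,a,\varepsilon)\leftarrow$ (empty body); and $p(a\beta,av,w)\leftarrow p(\beta,v,w)$ whenever $v\neq\varepsilon$; (C3) for $A\in N$ and each rule $A\to\alpha$: $p(A\beta,u,\varepsilon)\leftarrow m(A\to\alpha)\wedge p(\alpha,u,\varepsilon)$; and $p(A\beta,u,w)\leftarrow m(A\to\alpha)\wedge p(\alpha,u,v)\wedge p(\beta,v,w)$ whenever $v\neq\varepsilon$.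 A $p$- or $q$-atom is provable if it lies in the least Herbrand model of these clauses with all $m$-atoms taken as true. The defined goals of $\mathrm{Expl}(G_\ell)$ form the smallest set containing $q(\ell)$ such that whenever $H$ is a defined goal and $H\leftarrow\alpha$ is one of the clauses above whose $p$-atoms are all provable, every $p$-atom of $\alpha$ is a defined goal. The defining formula of a defined goal $H$ is $H\Leftrightarrow\alpha_1\vee\dots\vee\alpha_M$, where the $\alpha_i$ are the bodies of all such clauses with head $H$ whose $p$-atoms are all provable. $H$ is a parent of $C$ if $C$ occurs in some $\alpha_i$; the ancestor relation is the transitive closure of the parent relation. Two defined goals $A,B$ are equivalent if $A=B$ or each is an ancestor of the other; the equivalence classes are called SCCs (strongly connected components). *)

theory Defs
  imports Main
begin

datatype ('n, 't) sym = NT 'n | T 't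

type_synonym ('n, 't) rule = "'n \<times> ('n, 't) sym list"

definition derive1 :: "('n, 't) rule set \<Rightarrow> ('n, 't) sym list \<Rightarrow> ('n, 't) sym list \<Rightarrow> bool" where
  "derive1 R x y \<longleftrightarrow> (\<exists>u A \<alpha> v. x = u @ [NT A] @ v \<and> (A, \<alpha>) \<in> R \<and> y = u @ \<alpha> @ v)"

definition derives :: "('n, 't) rule set \<Rightarrow> ('n, 't) sym list \<Rightarrow> ('n, 't) sym list \<Rightarrow> bool" where
  "derives R = (derive1 R)\<^sup>*\<^sup>*"

definition syms :: "'t set \<Rightarrow> 'n set \<Rightarrow> ('n, 't) sym set" where
  "syms Sig N = NT ` N \<union> T ` Sig"

definition cfg :: "'t set \<Rightarrow> 'n set \<Rightarrow> 'n \<Rightarrow> ('n, 't) rule set \<Rightarrow> bool" where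
  "cfg Sig N s R \<longleftrightarrow>
     finite Sig \<and> finite N \<and> finite R \<and> s \<in> N \<and>
     (\<forall>(A, \<alpha>) \<in> R. A \<in> N \<and> \<alpha> \<noteq> [] \<and> set \<alpha> \<subseteq> syms Sig N) \<and>
     (\<forall>A \<in> N. \<exists>\<alpha> x y w. (A, \<alpha>) \<in> R \<and> derives R [NT s] (x @ [NT A] @ y) \<and>
                 derives R (x @ \<alpha> @ y) (map T w) \<and> set w \<subseteq> Sig)"

definition is_prefix :: "'t set \<Rightarrow> 'n \<Rightarrow> ('n, 't) rule set \<Rightarrow> 't list \<Rightarrow> bool" where
  "is_prefix Sig s R l \<longleftrightarrow> l \<noteq> [] \<and>
     (\<exists>w'. set (l @ w') \<subseteq> Sig \<and> derives R [NT s] (map T (l @ w')))"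

datatype ('n, 't) atom =
    Q "'t list"
  | P "('n, 't) sym list" "'t list" "'t list"
  | M "('n, 't) rule"

fun is_P :: "('n, 't) atom \<Rightarrow> bool" where
  "is_P (P _ _ _) = True"
| "is_P _ = False"

text \<open>The ground clauses (C0)-(C3); a clause is a head together with its body,
  a list of atoms (a conjunction, occurrences kept).\<close>
inductive clause :: "'t set \<Rightarrow> 'n set \<Rightarrow> 'n \<Rightarrow> ('n, 't) rule set \<Rightarrow> 't list
    \<Rightarrow> ('n, 't) atom \<Rightarrow> ('n, 't) atom list \<Rightarrow> bool"
  for Sig N s R l where
  C0: "clause Sig N s R l (Q l) [P [NT s] l []]"
| C1: "set u \<subseteq> Sig \<Longrightarrow> clause Sig N s R l (P [] u u) []"
| C2a: "a \<in> Sig \<Longrightarrow> set \<beta> \<subseteq> syms Sig N \<Longrightarrow>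
        clause Sig N s R l (P (T a # \<beta>) [a] []) []"
| C2b: "a \<in> Sig \<Longrightarrow> set \<beta> \<subseteq> syms Sig N \<Longrightarrow> set v \<subseteq> Sig \<Longrightarrow> set w \<subseteq> Sig \<Longrightarrow>
        v \<noteq> [] \<Longrightarrow>
        clause Sig N s R l (P (T a # \<beta>) (a # v) w) [P \<beta> v w]"
| C3a: "(A, \<alpha>) \<in> R \<Longrightarrow> set \<beta> \<subseteq> syms Sig N \<Longrightarrow> set u \<subseteq> Sig \<Longrightarrow>
        clause Sig N s R l (P (NT A # \<beta>) u []) [M (A, \<alpha>), P \<alpha> u []]"
| C3b: "(A, \<alpha>) \<in> R \<Longrightarrow> set \<beta> \<subseteq> syms Sig N \<Longrightarrow> set u \<subseteq> Sig \<Longrightarrow>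
        set v \<subseteq> Sig \<Longrightarrow> set w \<subseteq> Sig \<Longrightarrow> v \<noteq> [] \<Longrightarrow>
        clause Sig N s R l (P (NT A # \<beta>) u w) [M (A, \<alpha>), P \<alpha> u v, P \<beta> v w]"

text \<open>Least Herbrand model, all m-atoms (for rules of G') taken as true.\<close>
inductive provable :: "'t set \<Rightarrow> 'n set \<Rightarrow> 'n \<Rightarrow> ('n, 't) rule set \<Rightarrow> 't list
    \<Rightarrow> ('n, 't) atom \<Rightarrow> bool"
  for Sig N s R l where
  prov_M: "r \<in> R \<Longrightarrow> provable Sig N s R l (M r)"
| prov_clause: "clause Sig N s R l H body \<Longrightarrow> (\<forall>b \<in> set body. provable Sig N s R l b)
        \<Longrightarrow> provable Sig N s R l H"

definition used_clause :: "'t set \<Rightarrow> 'n set \<Rightarrow> 'n \<Rightarrow> ('n, 't) rule set \<Rightarrow> 't list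
    \<Rightarrow> ('n, 't) atom \<Rightarrow> ('n, 't) atom list \<Rightarrow> bool" where
  "used_clause Sig N s R l H body \<longleftrightarrow> clause Sig N s R l H body \<and>
     (\<forall>b \<in> set body. is_P b \<longrightarrow> provable Sig N s R l b)"

inductive defined_goal :: "'t set \<Rightarrow> 'n set \<Rightarrow> 'n \<Rightarrow> ('n, 't) rule set \<Rightarrow> 't list
    \<Rightarrow> ('n, 't) atom \<Rightarrow> bool"
  for Sig N s R l where
  dg_root: "defined_goal Sig N s R l (Q l)"
| dg_step: "defined_goal Sig N s R l H \<Longrightarrow> used_clause Sig N s R l H body \<Longrightarrow>
        b \<in> set body \<Longrightarrow> is_P b \<Longrightarrow> defined_goal Sig N s R l b"

text \<open>H is a parent of C if C occurs in some disjunct of the defining formula of H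
  (both being defined goals).\<close>
definition parent :: "'t set \<Rightarrow> 'n set \<Rightarrow> 'n \<Rightarrow> ('n, 't) rule set \<Rightarrow> 't list
    \<Rightarrow> ('n, 't) atom \<Rightarrow> ('n, 't) atom \<Rightarrow> bool" where
  "parent Sig N s R l H C \<longleftrightarrow> defined_goal Sig N s R l H \<and> defined_goal Sig N s R l C \<and>
     (\<exists>body. used_clause Sig N s R l H body \<and> C \<in> set body)"

definition ancestor :: "'t set \<Rightarrow> 'n set \<Rightarrow> 'n \<Rightarrow> ('n, 't) rule set \<Rightarrow> 't list
    \<Rightarrow> ('n, 't) atom \<Rightarrow> ('n, 't) atom \<Rightarrow> bool" where
  "ancestor Sig N s R l = (parent Sig N s R l)\<^sup>+\<^sup>+"

definition same_scc :: "'t set \<Rightarrow> 'n set \<Rightarrow> 'n \<Rightarrow> ('n, 't) rule set \<Rightarrow> 't list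
    \<Rightarrow> ('n, 't) atom \<Rightarrow> ('n, 't) atom \<Rightarrow> bool" where
  "same_scc Sig N s R l A B \<longleftrightarrow> A = B \<or>
     (ancestor Sig N s R l A B \<and> ancestor Sig N s R l B A)"

end

theory Submission
  imports Defs
begin

fun msr :: "('n, 't) atom \<Rightarrow> nat" where
  "msr (Q l) = length l"
| "msr (P _ u _) = length u"
| "msr (M _) = 0"

lemma prov_len:
  assumes c: "cfg Sig N s R"
  shows "provable Sig N s R l X \<Longrightarrow> X = P \<gamma> u w \<Longrightarrow>
     length w \<le> length u \<and> (\<gamma> \<noteq> [] \<longrightarrow> length w < length u)"
proof (induction X arbitrary: \<gamma> u w rule: provable.induct)
  case (prov_M r) then show ?case by simp
next
  case (prov_clause H body)
  have IH: "\<And>b \<gamma>' u' w'. b \<in> set body \<Longrightarrow> b = P \<gamma>' u' w' \<Longrightarrow>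
      length w' \<le> length u' \<and> (\<gamma>' \<noteq> [] \<longrightarrow> length w' < length u')"
    using prov_clause.IH by blast
  from prov_clause.hyps(1) show ?case
  proof (cases rule: clause.cases)
    case C0 then show ?thesis using prov_clause.prems by simp
  next
    case (C1 u0) then show ?thesis using prov_clause.prems by simp
  next
    case (C2a a \<beta>) then show ?thesis using prov_clause.prems by simp
  next
    case (C2b a \<beta> v w0)
    have "length w0 \<le> length v" using IH[of "P \<beta> v w0" \<beta> v w0] C2b by simp
    then show ?thesis using C2b prov_clause.prems by simp
  next
    case (C3a A \<alpha> \<beta> u0)
    have "\<alpha> \<noteq> []" using c C3a(3) unfolding cfg_def by blast
    then have "0 < length u0" using IH[of "P \<alpha> u0 []" \<alpha> u0 "[]"] C3a by simp
    then show ?thesis using C3a prov_clause.prems by simp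
  next
    case (C3b A \<alpha> \<beta> u0 v w0)
    have "\<alpha> \<noteq> []" using c C3b(3) unfolding cfg_def by blast
    then have "length v < length u0" using IH[of "P \<alpha> u0 v" \<alpha> u0 v] C3b by simp
    moreover have "length w0 \<le> length v" using IH[of "P \<beta> v w0" \<beta> v w0] C3b by simp
    ultimately show ?thesis using C3b prov_clause.prems by simp
  qed
qed

lemma dg_not_M: "defined_goal Sig N s R l X \<Longrightarrow> X \<noteq> M r"
  by (induction rule: defined_goal.induct) auto

lemma parent_msr:
  assumes c: "cfg Sig N s R" and p: "parent Sig N s R l H C"
  shows "msr C \<le> msr H"
proof -
  from p obtain body where u: "used_clause Sig N s R l H body" and cin: "C \<in> set body"
    unfolding parent_def by blast
  from u have cl: "clause Sig N s R l H body" and pr: "\<forall>b\<in>set body. is_P b \<longrightarrow> provable Sig N s R l b"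
    unfolding used_clause_def by auto
  from cl show ?thesis
  proof (cases rule: clause.cases)
    case (C3b A \<alpha> \<beta> u v w)
    have "provable Sig N s R l (P \<alpha> u v)" using pr C3b by auto
    from prov_len[OF c this] have "length v \<le> length u" by simp
    then show ?thesis using cin C3b by auto
  qed (use cin in auto)
qed

lemma anc_msr:
  assumes c: "cfg Sig N s R" and a: "ancestor Sig N s R l X Y"
  shows "msr Y \<le> msr X"
  using a unfolding ancestor_def
proof (induction rule: tranclp_induct)
  case (base y) then show ?case using parent_msr[OF c] by blast
next
  case (step y z) then show ?case using parent_msr[OF c, of l y z] by simp
qed

lemma two_goals:
  assumes c: "cfg Sig N s R" and u: "used_clause Sig N s R l H body"
    and ij: "i < length body" "j < length body" "i \<noteq> j"
    and ni: "\<And>r. body ! i \<noteq> M r" and nj: "\<And>r. body ! j \<noteq> M r"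
  shows "msr (body ! i) \<noteq> msr (body ! j)"
proof -
  have cl: "clause Sig N s R l H body" and pr: "\<forall>b\<in>set body. is_P b \<longrightarrow> provable Sig N s R l b"
    using u unfolding used_clause_def by auto
  from cl show ?thesis
  proof (cases rule: clause.cases)
    case C0 then show ?thesis using ij by simp
  next
    case C1 then show ?thesis using ij by simp
  next
    case C2a then show ?thesis using ij by simp
  next
    case C2b then show ?thesis using ij by simp
  next
    case (C3a A \<alpha> \<beta> u)
    have "i < 2" "j < 2" using ij C3a by simp_all
    moreover have "i \<noteq> 0" using ni[of "(A, \<alpha>)"] C3a by (cases i) simp_all
    moreover have "j \<noteq> 0" using nj[of "(A, \<alpha>)"] C3a by (cases j) simp_all
    ultimately show ?thesis using ij(3) by linarith
  next
    case (C3b A \<alpha> \<beta> u v w)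
    have "provable Sig N s R l (P \<alpha> u v)" using pr C3b by simp
    moreover have "\<alpha> \<noteq> []" using c C3b unfolding cfg_def by blast
    ultimately have lt: "length v < length u" using prov_len[OF c] by blast
    have "i \<noteq> 0" using ni[of "(A, \<alpha>)"] C3b by (cases i) simp_all
    moreover have "j \<noteq> 0" using nj[of "(A, \<alpha>)"] C3b by (cases j) simp_all
    moreover have "i < 3" "j < 3" using ij C3b by simp_all
    ultimately have "(i = 1 \<and> j = 2) \<or> (i = 2 \<and> j = 1)" using ij(3) by linarith
    then show ?thesis using lt C3b by (elim disjE) simp_all
  qed
qed

theorem lemma3:
  fixes Sig :: "'t set" and N :: "'n set" and s :: 'n and R :: "('n, 't) rule set"
    and l :: "'t list" and H :: "('n, 't) atom" and body :: "('n, 't) atom list"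
    and i j :: nat
  assumes "cfg Sig N s R"
    and "is_prefix Sig s R l"
    and "defined_goal Sig N s R l H"
    and "used_clause Sig N s R l H body"
    and "i < length body" and "j < length body" and "i \<noteq> j"
    and "defined_goal Sig N s R l (body ! i)"
    and "defined_goal Sig N s R l (body ! j)"
  shows "\<not> same_scc Sig N s R l (body ! i) (body ! j)"
proof
  have ni: "\<And>r. body ! i \<noteq> M r" using dg_not_M[OF assms(8)] .
  have nj: "\<And>r. body ! j \<noteq> M r" using dg_not_M[OF assms(9)] .
  have d: "msr (body ! i) \<noteq> msr (body ! j)"
    using two_goals[OF assms(1,4,5,6,7) ni nj] .
  then have ne: "body ! i \<noteq> body ! j" by auto
  assume "same_scc Sig N s R l (body ! i) (body ! j)"
  with ne have "ancestor Sig N s R l (body ! i) (body ! j)" "ancestor Sig N s R l (body ! j) (body ! i)"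
    unfolding same_scc_def by auto
  then have "msr (body ! i) = msr (body ! j)" using anc_msr[OF assms(1)] by (meson le_antisym)
  with d show False by simp
qed

end
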